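(* Let $(\mathscr{P},\mathscr{B},\mathrm{I})$ be an incidence structure with incidence graph $\Gamma$, let $\varphi$ be a gain function on $\Gamma$ with gain group $G$ acting on the left on a nonempty set $\Lambda$, and let $f:\mathscr{P}\cup\mathscr{B}\to G$ be any function. Let ${}^f\varphi$ be the switched gain function ${}^f\varphi(e)=f(p)\varphi(e)f(b)^{-1}$ for each edge $e=bp$ (oriented from the line $b$ to the point $p$). Write $\mathfrak{M}(\Gamma,\varphi)=(\mathscr{P}',\mathscr{B}',\mathrm{I}')$ and $\mathfrak{M}(\Gamma,{}^f\varphi)=(\mathscr{P}',\mathscr{B}',\mathrm{I}'_f)$. Define $g_1:\mathscr{P}'\to\mathscr{P}'$ by $g_1(x_p)=x_p$ and $g_1(y_{b,\lambda})=y_{b,f(b)\cdot\lambda}$, and $g_2:\mathscr{B}'\to\mathscr{B}'$ by $g_2(z_{p,\lambda})=z_{p,f(p)\cdot\lambda}$. Then $(g_1,g_2)$ is an incidence structure isomorphism from $\mathfrak{M}(\Gamma,\varphi)$ to $\mathfrak{M}(\Gamma,{}^f\varphi)$, i.e. $g_1,g_2$ are bijections and $u\ \mathrm{I}'\ z$ if and only if $g_1(u)\ \mathrm{I}'_f\ g_2(z)$.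
   Context: An incidence structure is a triple $(\mathscr{P},\mathscr{B},\mathrm{I})$ where $\mathscr{P}$ (points) and $\mathscr{B}$ (lines) are nonempty disjoint sets and $\mathrm{I}\subseteq\mathscr{P}\times\mathscr{B}$ is a nonempty incidence relation; write $p\ \mathrm{I}\ b$ when $(p,b)\in\mathrm{I}$. The incidence graph $\Gamma$ is the bipartite graph with vertex set $\mathscr{P}\cup\mathscr{B}$ and an edge $bp$ for each incident pair; every edge is oriented from its line to its point. A gain function with gain group $G$ assigns to each edge $e$ an element $\varphi(e)\in G$. The gain group acts on $\Lambda$ on the left. Construction $\mathfrak{M}(\Gamma,\varphi)$: the incidence structure whose points are the formal symbols $x_p$ ($p\in\mathscr{P}$) and $y_{b,\lambda}$ ($b\in\mathscr{B},\lambda\in\Lambda$), whose lines are the formal symbols $z_{p,\lambda}$ ($p\in\mathscr{P},\lambda\in\Lambda$), and whose incidences are exactly: $x_p$ incident with $z_{p,\lambda}$ for all $\lambda$, and $y_{b,\lambda}$ incident with $z_{p,\mu}$ whenever $b\ \mathrm{I}\ p$ and $\mu=\varphi(bp)\cdot\lambda$. Note $\mathfrak{M}(\Gamma,\varphi)$ and $\mathfrak{M}(\Gamma,{}^f\varphi)$ have the same point and line sets. *)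

theory Defs
  imports "HOL-Algebra.Group_Action"
begin

definition incidence_structure :: "'a set \<Rightarrow> 'a set \<Rightarrow> ('a \<times> 'a) set \<Rightarrow> bool" where
  "incidence_structure P B I \<longleftrightarrow> P \<noteq> {} \<and> B \<noteq> {} \<and> P \<inter> B = {} \<and> I \<subseteq> P \<times> B \<and> I \<noteq> {}"

(* A gain function assigns to each edge bp of the incidence graph (i.e. each (p,b) \<in> I,
   oriented from line b to point p) an element phi b p of the gain group. *)
definition gain_function :: "('g, 'm) monoid_scheme \<Rightarrow> ('a \<times> 'a) set \<Rightarrow> ('a \<Rightarrow> 'a \<Rightarrow> 'g) \<Rightarrow> bool" where
  "gain_function G I phi \<longleftrightarrow> (\<forall>(p, b) \<in> I. phi b p \<in> carrier G)"

definition switch :: "('g, 'm) monoid_scheme \<Rightarrow> ('a \<Rightarrow> 'g) \<Rightarrow> ('a \<Rightarrow> 'a \<Rightarrow> 'g) \<Rightarrow> 'a \<Rightarrow> 'a \<Rightarrow> 'g" where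
  "switch G f phi b p = f p \<otimes>\<^bsub>G\<^esub> phi b p \<otimes>\<^bsub>G\<^esub> inv\<^bsub>G\<^esub> (f b)"

datatype ('a, 'l) mpoint = X 'a | Y 'a 'l
datatype ('a, 'l) mline = Z 'a 'l

definition M_points :: "'a set \<Rightarrow> 'a set \<Rightarrow> 'l set \<Rightarrow> ('a, 'l) mpoint set" where
  "M_points P B \<Lambda> = {X p | p. p \<in> P} \<union> {Y b l | b l. b \<in> B \<and> l \<in> \<Lambda>}"

definition M_lines :: "'a set \<Rightarrow> 'l set \<Rightarrow> ('a, 'l) mline set" where
  "M_lines P \<Lambda> = {Z p l | p l. p \<in> P \<and> l \<in> \<Lambda>}"

definition M_inc :: "'a set \<Rightarrow> ('a \<times> 'a) set \<Rightarrow> 'l set \<Rightarrow> ('g \<Rightarrow> 'l \<Rightarrow> 'l) \<Rightarrow> ('a \<Rightarrow> 'a \<Rightarrow> 'g)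
    \<Rightarrow> (('a, 'l) mpoint \<times> ('a, 'l) mline) set" where
  "M_inc P I \<Lambda> act phi =
     {(X p, Z p l) | p l. p \<in> P \<and> l \<in> \<Lambda>}
   \<union> {(Y b l, Z p (act (phi b p) l)) | b p l. (p, b) \<in> I \<and> l \<in> \<Lambda>}"

fun g1 :: "('g \<Rightarrow> 'l \<Rightarrow> 'l) \<Rightarrow> ('a \<Rightarrow> 'g) \<Rightarrow> ('a, 'l) mpoint \<Rightarrow> ('a, 'l) mpoint" where
  "g1 act f (X p) = X p"
| "g1 act f (Y b l) = Y b (act (f b) l)"

fun g2 :: "('g \<Rightarrow> 'l \<Rightarrow> 'l) \<Rightarrow> ('a \<Rightarrow> 'g) \<Rightarrow> ('a, 'l) mline \<Rightarrow> ('a, 'l) mline" where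
  "g2 act f (Z p l) = Z p (act (f p) l)"

end

theory Submission
  imports Defs
begin

lemma act_inv_cancel:
  assumes "group G" "group_action G L act" "g \<in> carrier G" "l \<in> L"
  shows "act (inv\<^bsub>G\<^esub> g) (act g l) = l"
proof -
  interpret group_action G L act by fact
  have "act (inv\<^bsub>G\<^esub> g) (act g l) = act (inv\<^bsub>G\<^esub> g \<otimes>\<^bsub>G\<^esub> g) l"
    using composition_rule assms group.inv_closed by metis
  also have "\<dots> = act \<one>\<^bsub>G\<^esub> l" using assms group.l_inv by metis
  also have "\<dots> = l" using id_eq_one assms(4) by (metis restrict_apply')
  finally show ?thesis .
qed

lemma switch_act:
  assumes "group G" "group_action G L act" "fp \<in> carrier G" "fb \<in> carrier G"
    "h \<in> carrier G" "l \<in> L"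
  shows "act (fp \<otimes>\<^bsub>G\<^esub> h \<otimes>\<^bsub>G\<^esub> inv\<^bsub>G\<^esub> fb) (act fb l) = act fp (act h l)"
proof -
  interpret group_action G L act by fact
  have el: "act fb l \<in> L" using element_image assms by blast
  have "act (fp \<otimes>\<^bsub>G\<^esub> h \<otimes>\<^bsub>G\<^esub> inv\<^bsub>G\<^esub> fb) (act fb l)
      = act (fp \<otimes>\<^bsub>G\<^esub> h) (act (inv\<^bsub>G\<^esub> fb) (act fb l))"
    using composition_rule[OF el] assms by (simp add: group.inv_closed group.subgroup_self subgroup.m_closed)
  also have "\<dots> = act (fp \<otimes>\<^bsub>G\<^esub> h) l" using act_inv_cancel assms by metis
  also have "\<dots> = act fp (act h l)" using composition_rule assms by metis
  finally show ?thesis .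
qed

lemma act_bij:
  assumes "group_action G L act" "g \<in> carrier G"
  shows "bij_betw (act g) L L"
  using group_action.inj_prop[OF assms] group_action.surj_prop[OF assms] by (simp add: bij_betw_def)

theorem proposition1:
  fixes G :: "('g, 'm) monoid_scheme"
    and P B :: "'a set" and I :: "('a \<times> 'a) set"
    and \<Lambda> :: "'l set" and act :: "'g \<Rightarrow> 'l \<Rightarrow> 'l"
    and phi :: "'a \<Rightarrow> 'a \<Rightarrow> 'g" and f :: "'a \<Rightarrow> 'g"
  assumes "incidence_structure P B I"
    and "group G"
    and "group_action G \<Lambda> act"
    and "\<Lambda> \<noteq> {}"
    and "gain_function G I phi"
    and "f \<in> P \<union> B \<rightarrow> carrier G"
  shows "bij_betw (g1 act f) (M_points P B \<Lambda>) (M_points P B \<Lambda>)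
       \<and> bij_betw (g2 act f) (M_lines P \<Lambda>) (M_lines P \<Lambda>)
       \<and> (\<forall>u \<in> M_points P B \<Lambda>. \<forall>z \<in> M_lines P \<Lambda>.
            (u, z) \<in> M_inc P I \<Lambda> act phi
              \<longleftrightarrow> (g1 act f u, g2 act f z) \<in> M_inc P I \<Lambda> act (switch G f phi))"
proof (intro conjI ballI)
  have fP: "\<And>p. p \<in> P \<Longrightarrow> f p \<in> carrier G" and fB: "\<And>b. b \<in> B \<Longrightarrow> f b \<in> carrier G"
    using assms(6) by auto
  have IPB: "\<And>p b. (p, b) \<in> I \<Longrightarrow> p \<in> P \<and> b \<in> B"
    using assms(1) unfolding incidence_structure_def by auto
  have phiC: "\<And>p b. (p, b) \<in> I \<Longrightarrow> phi b p \<in> carrier G"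
    using assms(5) unfolding gain_function_def by auto
  have inj: "\<And>g x y. g \<in> carrier G \<Longrightarrow> x \<in> \<Lambda> \<Longrightarrow> y \<in> \<Lambda> \<Longrightarrow> act g x = act g y \<longleftrightarrow> x = y"
    using group_action.inj_prop[OF assms(3)] by (meson inj_on_def)
  have cl: "\<And>g x. g \<in> carrier G \<Longrightarrow> x \<in> \<Lambda> \<Longrightarrow> act g x \<in> \<Lambda>"
    using group_action.element_image[OF assms(3)] by blast
  have pre: "\<And>g y. g \<in> carrier G \<Longrightarrow> y \<in> \<Lambda> \<Longrightarrow> \<exists>x\<in>\<Lambda>. act g x = y"
    using group_action.surj_prop[OF assms(3)] by (metis imageE)
  show "bij_betw (g1 act f) (M_points P B \<Lambda>) (M_points P B \<Lambda>)"
    unfolding bij_betw_def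
  proof
    show "inj_on (g1 act f) (M_points P B \<Lambda>)"
      unfolding inj_on_def M_points_def using inj fB by auto
    show "g1 act f ` M_points P B \<Lambda> = M_points P B \<Lambda>"
    proof
      show "g1 act f ` M_points P B \<Lambda> \<subseteq> M_points P B \<Lambda>"
        unfolding M_points_def using cl fB by auto
      show "M_points P B \<Lambda> \<subseteq> g1 act f ` M_points P B \<Lambda>"
      proof
        fix u assume "u \<in> M_points P B \<Lambda>"
        then consider p where "u = X p" "p \<in> P" | b l where "u = Y b l" "b \<in> B" "l \<in> \<Lambda>"
          unfolding M_points_def by auto
        then show "u \<in> g1 act f ` M_points P B \<Lambda>"
        proof cases
          case 1 then show ?thesis unfolding M_points_def by (auto intro!: image_eqI[where x="X p"])
        next
          case 2
          then obtain x where "x \<in> \<Lambda>" "act (f b) x = l" using pre fB by blast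
          then show ?thesis using 2 unfolding M_points_def by (auto intro!: image_eqI[where x="Y b x"])
        qed
      qed
    qed
  qed
  show "bij_betw (g2 act f) (M_lines P \<Lambda>) (M_lines P \<Lambda>)"
    unfolding bij_betw_def
  proof
    show "inj_on (g2 act f) (M_lines P \<Lambda>)"
      unfolding inj_on_def M_lines_def using inj fP by auto
    show "g2 act f ` M_lines P \<Lambda> = M_lines P \<Lambda>"
    proof
      show "g2 act f ` M_lines P \<Lambda> \<subseteq> M_lines P \<Lambda>"
        unfolding M_lines_def using cl fP by auto
      show "M_lines P \<Lambda> \<subseteq> g2 act f ` M_lines P \<Lambda>"
      proof
        fix z assume "z \<in> M_lines P \<Lambda>"
        then obtain p l where 2: "z = Z p l" "p \<in> P" "l \<in> \<Lambda>"
          unfolding M_lines_def by auto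
        then obtain x where "x \<in> \<Lambda>" "act (f p) x = l" using pre fP by blast
        then show "z \<in> g2 act f ` M_lines P \<Lambda>" using 2 unfolding M_lines_def
          by (auto intro!: image_eqI[where x="Z p x"])
      qed
    qed
  qed
  fix u z assume u: "u \<in> M_points P B \<Lambda>" and z: "z \<in> M_lines P \<Lambda>"
  from z obtain q m where zq: "z = Z q m" "q \<in> P" "m \<in> \<Lambda>"
    unfolding M_lines_def by auto
  from u consider p where "u = X p" "p \<in> P" | b l where "u = Y b l" "b \<in> B" "l \<in> \<Lambda>"
    unfolding M_points_def by auto
  then show "(u, z) \<in> M_inc P I \<Lambda> act phi
              \<longleftrightarrow> (g1 act f u, g2 act f z) \<in> M_inc P I \<Lambda> act (switch G f phi)"
  proof cases
    case 1
    then show ?thesis using zq cl fP unfolding M_inc_def by auto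
  next
    case 2
    have "(u, z) \<in> M_inc P I \<Lambda> act phi \<longleftrightarrow> (q, b) \<in> I \<and> m = act (phi b q) l"
      using 2 zq unfolding M_inc_def by auto
    moreover have "(g1 act f u, g2 act f z) \<in> M_inc P I \<Lambda> act (switch G f phi)
        \<longleftrightarrow> (q, b) \<in> I \<and> act (f q) m = act (switch G f phi b q) (act (f b) l)"
    proof
      assume "(g1 act f u, g2 act f z) \<in> M_inc P I \<Lambda> act (switch G f phi)"
      then obtain l' where "(q, b) \<in> I" "l' \<in> \<Lambda>" "act (f b) l = l'"
          "act (f q) m = act (switch G f phi b q) l'"
        using 2 zq unfolding M_inc_def by auto
      then show "(q, b) \<in> I \<and> act (f q) m = act (switch G f phi b q) (act (f b) l)" by simp
    next
      assume "(q, b) \<in> I \<and> act (f q) m = act (switch G f phi b q) (act (f b) l)"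
      then show "(g1 act f u, g2 act f z) \<in> M_inc P I \<Lambda> act (switch G f phi)"
        using 2 zq cl fB unfolding M_inc_def by auto
    qed
    moreover have "(q, b) \<in> I \<Longrightarrow> act (switch G f phi b q) (act (f b) l) = act (f q) (act (phi b q) l)"
      unfolding switch_def using switch_act[OF assms(2,3)] fP fB phiC 2 zq by blast
    moreover have "(q, b) \<in> I \<Longrightarrow> act (f q) m = act (f q) (act (phi b q) l) \<longleftrightarrow> m = act (phi b q) l"
      using inj fP cl phiC 2 zq by blast
    ultimately show ?thesis by metis
  qed
qed

end
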